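(* Let $k$ be a job such that there is exactly one job $j$ for which $(j,k)$ is a red pair. Then, in the schedule produced by $1$-SORT, \[ \frac{\sigma_k+D(j,k)}{\sigma_k+D^*(j,k)}\le\frac{\nu+\nu^2+2+\frac{2}{\mu}}{\nu+\nu^2+1+\frac{1}{\mu}}. \]
   Context: Setting: single machine, jobs $J=\{1,\dots,n\}$, each job $j$ with test time $t_j\ge0$ and processing time $p_j\ge0$ (revealed only when the test is executed); each job's test must be executed before its processing part, which may start any time after the test; operations are non-preemptive and the machine does one at a time. $\sigma_j=t_j+p_j$, $m_j=\max\{t_j,p_j\}$. Standing assumption (general position): no two of the $3n$ numbers $t_j,p_j,\sigma_j$ are equal, and $\sigma_k>0$. Algorithm $1$-SORT: keep a priority queue of available operations, initially the test of every job $j$ with priority $t_j$; repeatedly remove a minimum-priority operation and execute it immediately; after executing the test of $j$, insert the processing part of $j$ with priority $p_j$. For distinct jobs $j,k$, let $d_{k,j}$ be the total amount of time during which operations of $k$ are executed before the completion time of $j$, and $D(j,k)=d_{j,k}+d_{k,j}$, evaluated for the $1$-SORT schedule; $D^*(j,k)=\min\{\sigma_j,\sigma_k\}$. Fix constants $\mu>1$ and $0<\nu<1$ with $\mu\nu>1$ and $1+\frac1\mu\le\nu+\nu^2$. A job $j$ is imbalanced if $m_j\ge\mu\min\{t_j,p_j\}$. For distinct jobs $j,k$, the ordered pair $(j,k)$ is a red pair if $j$ is imbalanced, $m_j\ge t_k\ge\nu m_j$, and $p_k\ge\nu t_k$. *)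

theory Defs
  imports Main "HOL.Real"
begin

datatype 'a operation = Test 'a | Proc 'a

fun op_job :: "'a operation \<Rightarrow> 'a" where
  "op_job (Test j) = j"
| "op_job (Proc j) = j"

text \<open>Length of an operation; also its priority in 1-SORT.\<close>
fun op_len :: "('a \<Rightarrow> real) \<Rightarrow> ('a \<Rightarrow> real) \<Rightarrow> 'a operation \<Rightarrow> real" where
  "op_len t p (Test j) = t j"
| "op_len t p (Proc j) = p j"

definition available :: "'a set \<Rightarrow> 'a operation list \<Rightarrow> 'a operation set" where
  "available J xs =
     {Test j | j. j \<in> J \<and> Test j \<notin> set xs}
   \<union> {Proc j | j. j \<in> J \<and> Test j \<in> set xs \<and> Proc j \<notin> set xs}"

text \<open>Operations are executed back to back starting at time 0.\<close>
definition one_sort_order ::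
  "'a set \<Rightarrow> ('a \<Rightarrow> real) \<Rightarrow> ('a \<Rightarrow> real) \<Rightarrow> 'a operation list \<Rightarrow> bool" where
  "one_sort_order J t p ops \<longleftrightarrow>
     length ops = 2 * card J \<and>
     (\<forall>i < length ops. ops ! i \<in> available J (take i ops) \<and>
        (\<forall>q \<in> available J (take i ops). op_len t p (ops ! i) \<le> op_len t p q))"

text \<open>d k j: total time during which operations of k are executed before the completion
  time of j (the completion of j's processing part).\<close>
definition dd :: "('a \<Rightarrow> real) \<Rightarrow> ('a \<Rightarrow> real) \<Rightarrow> 'a operation list \<Rightarrow> 'a \<Rightarrow> 'a \<Rightarrow> real" where
  "dd t p ops k j =
     sum_list (map (op_len t p) (filter (\<lambda>q. op_job q = k) (takeWhile (\<lambda>q. q \<noteq> Proc j) ops)))"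

definition DD :: "('a \<Rightarrow> real) \<Rightarrow> ('a \<Rightarrow> real) \<Rightarrow> 'a operation list \<Rightarrow> 'a \<Rightarrow> 'a \<Rightarrow> real" where
  "DD t p ops j k = dd t p ops j k + dd t p ops k j"

definition DDstar :: "('a \<Rightarrow> real) \<Rightarrow> ('a \<Rightarrow> real) \<Rightarrow> 'a \<Rightarrow> 'a \<Rightarrow> real" where
  "DDstar t p j k = min (t j + p j) (t k + p k)"

definition imbalanced :: "real \<Rightarrow> ('a \<Rightarrow> real) \<Rightarrow> ('a \<Rightarrow> real) \<Rightarrow> 'a \<Rightarrow> bool" where
  "imbalanced \<mu> t p j \<longleftrightarrow> max (t j) (p j) \<ge> \<mu> * min (t j) (p j)"

definition red_pair :: "real \<Rightarrow> real \<Rightarrow> ('a \<Rightarrow> real) \<Rightarrow> ('a \<Rightarrow> real) \<Rightarrow> 'a \<Rightarrow> 'a \<Rightarrow> bool" where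
  "red_pair \<mu> \<nu> t p j k \<longleftrightarrow> j \<noteq> k \<and> imbalanced \<mu> t p j \<and>
     max (t j) (p j) \<ge> t k \<and> t k \<ge> \<nu> * max (t j) (p j) \<and> p k \<ge> \<nu> * t k"

definition general_position :: "'a set \<Rightarrow> ('a \<Rightarrow> real) \<Rightarrow> ('a \<Rightarrow> real) \<Rightarrow> bool" where
  "general_position J t p \<longleftrightarrow>
     (\<forall>j\<in>J. \<forall>k\<in>J.
        (t j = t k \<longrightarrow> j = k) \<and> (p j = p k \<longrightarrow> j = k) \<and>
        (t j + p j = t k + p k \<longrightarrow> j = k) \<and>
        t j \<noteq> p k \<and> t j \<noteq> t k + p k \<and> p j \<noteq> t k + p k)"

end

theory Submission
  imports Defs
begin

lemma avail_step:
  assumes "one_sort_order J t p ops" "i < length ops"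
  shows "ops ! i \<in> available J (take i ops)"
    "\<And>q. q \<in> available J (take i ops) \<Longrightarrow> op_len t p (ops ! i) \<le> op_len t p q"
  using assms unfolding one_sort_order_def by auto

lemma ops_distinct:
  assumes "one_sort_order J t p ops"
  shows "distinct ops"
proof -
  have nt: "ops ! i \<notin> set (take i ops)" if "i < length ops" for i
    using avail_step(1)[OF assms that] unfolding available_def by auto
  show ?thesis
    unfolding distinct_conv_nth
  proof (intro allI impI)
    fix i i' assume h: "i < length ops" "i' < length ops" "i \<noteq> i'"
    show "ops ! i \<noteq> ops ! i'"
    proof (cases "i < i'")
      case True
      have "ops ! i \<in> set (take i' ops)"
        using True h by (metis in_set_conv_nth length_take min.absorb4 min_less_iff_conj nth_take)
      then show ?thesis using nt[OF h(2)] by auto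
    next
      case False
      then have "i' < i" using h by auto
      have "ops ! i' \<in> set (take i ops)"
        using \<open>i' < i\<close> h by (metis in_set_conv_nth length_take min.absorb4 min_less_iff_conj nth_take)
      then show ?thesis using nt[OF h(1)] by auto
    qed
  qed
qed

lemma tw_index:
  assumes "y \<in> set (takeWhile (\<lambda>q. q \<noteq> Proc k) ops)"
  obtains i where "i < length ops" "ops ! i = y"
    "set (take i ops) \<subseteq> set (takeWhile (\<lambda>q. q \<noteq> Proc k) ops)"
proof -
  define n where "n = length (takeWhile (\<lambda>q. q \<noteq> Proc k) ops)"
  have tw: "takeWhile (\<lambda>q. q \<noteq> Proc k) ops = take n ops"
    unfolding n_def by (rule takeWhile_eq_take)
  have "y \<in> set (take n ops)" using assms tw by simp
  then obtain i where i: "i < length (take n ops)" "take n ops ! i = y"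
    by (auto simp: in_set_conv_nth)
  have "i < length ops" "ops ! i = y" using i by auto
  moreover have "set (take i ops) \<subseteq> set (take n ops)"
    using i by (intro set_take_subset_set_take) simp
  ultimately show ?thesis using that tw by simp
qed

lemma before_bound:
  assumes "one_sort_order J t p ops" "k \<in> J"
    "y \<in> set (takeWhile (\<lambda>q. q \<noteq> Proc k) ops)"
  shows "op_len t p y \<le> max (t k) (p k)"
proof -
  obtain i where i: "i < length ops" "ops ! i = y"
    "set (take i ops) \<subseteq> set (takeWhile (\<lambda>q. q \<noteq> Proc k) ops)"
    using tw_index[OF assms(3)] by blast
  have nP: "Proc k \<notin> set (take i ops)"
    using i(3) set_takeWhileD by fastforce
  show ?thesis
  proof (cases "Test k \<in> set (take i ops)")
    case True
    then have "Proc k \<in> available J (take i ops)"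
      using nP assms(2) unfolding available_def by auto
    from avail_step(2)[OF assms(1) i(1) this] i(2) show ?thesis by simp
  next
    case False
    then have "Test k \<in> available J (take i ops)"
      using assms(2) unfolding available_def by auto
    from avail_step(2)[OF assms(1) i(1) this] i(2) show ?thesis by simp
  qed
qed

lemma test_before:
  assumes "one_sort_order J t p ops"
    "Proc x \<in> set (takeWhile (\<lambda>q. q \<noteq> Proc k) ops)"
  shows "Test x \<in> set (takeWhile (\<lambda>q. q \<noteq> Proc k) ops)"
proof -
  obtain i where i: "i < length ops" "ops ! i = Proc x"
    "set (take i ops) \<subseteq> set (takeWhile (\<lambda>q. q \<noteq> Proc k) ops)"
    using tw_index[OF assms(2)] by blast
  have "Test x \<in> set (take i ops)"
    using avail_step(1)[OF assms(1) i(1)] i(2) unfolding available_def by auto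
  then show ?thesis using i(3) by auto
qed

lemma dd_eq:
  assumes "one_sort_order J t p ops"
  shows "dd t p ops x y = sum (op_len t p) {q \<in> set (takeWhile (\<lambda>q. q \<noteq> Proc y) ops). op_job q = x}"
proof -
  have "distinct (filter (\<lambda>q. op_job q = x) (takeWhile (\<lambda>q. q \<noteq> Proc y) ops))"
    using ops_distinct[OF assms] by (metis distinct_filter takeWhile_eq_take distinct_take)
  then show ?thesis unfolding dd_def
    by (simp add: sum_list_distinct_conv_sum_set set_filter)
qed

lemma job_sub: "{q \<in> A. op_job q = x} \<subseteq> {Test x, Proc x}"
  by (auto, case_tac xa, auto)

lemma sum_two:
  assumes "S \<subseteq> {Test x, Proc x}" "t x \<ge> 0" "p x \<ge> 0"
  shows "sum (op_len t p) S \<le> t x + p x"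
proof -
  have "sum (op_len t p) S \<le> sum (op_len t p) {Test x, Proc x}"
    using assms by (intro sum_mono2) auto
  then show ?thesis by simp
qed


lemma A1: fixes S a x c :: real
  assumes "a * (x + 1 + c) \<le> 2 * c * S" "S \<ge> 0" "c > 0"
  shows "(2 * S + a) * (x + 1 + c) \<le> (x + 2 + 2 * c) * (S + S)"
proof -
  have "(2 * S + a) * (x + 1 + c) = 2*S*x + 2*S + 2*S*c + a * (x + 1 + c)" by (simp add: algebra_simps)
  moreover have "(x + 2 + 2 * c) * (S + S) = 2*S*x + 4*S + 4 *S*c" by (simp add: algebra_simps)
  ultimately show ?thesis using assms by (simp add: algebra_simps)
qed
lemma A2: fixes S a x c m :: real
  assumes "S * x \<le> 2 * m * x" "m * x \<le> 2 * m" "a * c \<ge> 0" "m * c \<ge> 0" "a \<ge> 0" "m \<ge> 0"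
  shows "(2 * S + a) * (x + 1 + c) \<le> (x + 2 + 2 * c) * (S + (m + a))"
proof -
  have "(2 * S + a) * (x + 1 + c) = 2*S*x + 2*S + 2*S*c + a*x + a + a*c" by (simp add: algebra_simps)
  moreover have "(x + 2 + 2 * c) * (S + (m + a)) = S*x + m*x + a*x + 2*S + 2*m + 2*a + 2*S*c + 2*m*c + 2*a*c" by (simp add: algebra_simps)
  ultimately show ?thesis using assms by argo
qed
lemma B: fixes S a x c m tk pk :: real
  assumes "S = tk + pk" "tk * x \<le> 2 * tk" "tk < m" "pk > m" "c * pk \<ge> 0" "c * m \<ge> 0" "a * c \<ge> 0" "a \<ge> 0" "c * tk \<ge> 0"
  shows "(S + m + a + tk) * (x + 1 + c) \<le> (x + 2 + 2 * c) * (S + (m + a))"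
proof -
  define W where "W = S + m + a"
  have h: "tk*x + tk + c*tk \<le> (1+c)*W"
  proof -
    have "(1+c)*W = tk + pk + m + a + c*tk + c*pk + c*m + c*a" unfolding W_def assms(1) by (simp add: algebra_simps)
    then show ?thesis using assms(2-9) by (simp add: mult.commute)
  qed
  have e1: "(S + m + a + tk) * (x + 1 + c) = W*(x+1+c) + (tk*x + tk + c*tk)" unfolding W_def by (simp add: algebra_simps)
  have e2: "(x + 2 + 2 * c) * (S + (m + a)) = W*(x+1+c) + (1+c)*W" unfolding W_def by (simp add: algebra_simps)
  show ?thesis unfolding e1 e2 using h by simp
qed

lemma frac_le_aux: fixes X Y N M :: real
  assumes "Y > 0" "M > 0" "X * M \<le> N * Y"
  shows "X / Y \<le> N / M"
proof -
  have "X \<le> N * Y / M" using assms by (simp add: pos_le_divide_eq)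
  then have "X \<le> N / M * Y" by simp
  then show ?thesis using assms(1) by (simp add: pos_divide_le_eq)
qed

lemma arith_main:
  fixes \<mu> \<nu> a m tk pk D Ds :: real
  assumes mu: "\<mu> > 1" and nu: "0 < \<nu>" "\<nu> < 1" and mn: "\<mu> * \<nu> > 1"
    and x1: "1 + 1 / \<mu> \<le> \<nu> + \<nu>^2"
    and a: "a > 0" "\<mu> * a \<le> m"
    and tk: "\<nu> * m \<le> tk" "tk < m" and pk: "\<nu> * tk \<le> pk" "pk \<noteq> m"
    and D: "D \<le> (if pk < m then tk + pk + a else m + a + tk)"
    and Ds: "Ds = min (m + a) (tk + pk)"
  shows "(tk + pk + D) / (tk + pk + Ds) \<le> (\<nu> + \<nu>^2 + 2 + 2 / \<mu>) / (\<nu> + \<nu>^2 + 1 + 1 / \<mu>)"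
proof -
  define c where "c = 1 / \<mu>"
  define x where "x = \<nu> + \<nu>^2"
  define S where "S = tk + pk"
  have c0: "c > 0" "c < 1" using mu unfolding c_def by auto
  have x1': "1 + c \<le> x" using x1 unfolding c_def x_def by simp
  have x2: "x < 2"
  proof -
    have "\<nu> * \<nu> < 1 * 1" using mult_strict_mono[of \<nu> 1 \<nu> 1] nu by simp
    then show ?thesis using nu unfolding x_def by (simp add: power2_eq_square)
  qed
  have "\<mu> * a > 0" using a mu by simp
  then have m0: "m > 0" using a by linarith
  have acm: "a \<le> c * m" using a mu unfolding c_def by (simp add: field_simps)
  have cnu: "c < \<nu>" using mn mu unfolding c_def by (simp add: field_simps)
  have "\<nu> * m > 0" using nu m0 by simp
  then have tk0: "tk > 0" using tk by linarith
  have Sx: "S \<ge> x * m"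
  proof -
    have "\<nu> * tk \<ge> \<nu> * (\<nu> * m)" using tk nu by (intro mult_left_mono) auto
    then show ?thesis unfolding S_def x_def using tk pk by (simp add: power2_eq_square algebra_simps)
  qed
  have sp: "x + 1 + c > 0" using x1' c0 by simp
  have "\<nu> * tk > 0" using nu tk0 by simp
  then have Spos: "S + Ds > 0" using Ds S_def tk0 a pk m0 by (simp add: min_def)
  have goal: "(S + D) * (x + 1 + c) \<le> (x + 2 + 2 * c) * (S + Ds)"
  proof (cases "pk < m")
    case True
    then have DA: "D \<le> S + a" using D S_def by simp
    have Slt: "S < 2 * m" using True tk S_def by simp
    show ?thesis
    proof (cases "S \<le> m + a")
      case True
      then have "Ds = S" using Ds S_def by simp
      have "a * (x + 1 + c) \<le> c * m * (x + 1 + c)" using acm sp by (intro mult_right_mono) auto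
      also have "\<dots> \<le> c * m * (2 * x)" using x1' c0 m0 by (intro mult_left_mono) auto
      also have "\<dots> = 2 * c * (x * m)" by simp
      also have "\<dots> \<le> 2 * c * S" using Sx c0 by (intro mult_left_mono) auto
      finally have k: "a * (x + 1 + c) \<le> 2 * c * S" .
      have "(S + D) * (x + 1 + c) \<le> (2 * S + a) * (x + 1 + c)" using DA sp by (intro mult_right_mono) auto
      also have "\<dots> \<le> (x + 2 + 2 * c) * (S + S)" using A1[OF k] S_def tk0 \<open>\<nu> * tk > 0\<close> pk c0 by simp
      finally show ?thesis using \<open>Ds = S\<close> by simp
    next
      case False
      then have "Ds = m + a" using Ds S_def by simp
      have k1: "S * x \<le> 2 * m * x" using Slt x1' c0 by (intro mult_right_mono) auto
      have k2: "m * x \<le> 2 * m" using x2 m0 by simp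
      have k3: "a * c \<ge> 0" "m * c \<ge> 0" using a c0 m0 by auto
      have "(S + D) * (x + 1 + c) \<le> (2 * S + a) * (x + 1 + c)" using DA sp by (intro mult_right_mono) auto
      also have "\<dots> \<le> (x + 2 + 2 * c) * (S + (m + a))" using A2[OF k1 k2 k3] a m0 by simp
      finally show ?thesis using \<open>Ds = m + a\<close> by simp
    qed
  next
    case False
    then have pkm: "pk > m" using pk by simp
    then have DB: "D \<le> m + a + tk" using D by simp
    have "c * m < \<nu> * m" using cnu m0 by simp
    then have "S > m + a" using acm tk pkm S_def by simp
    then have "Ds = m + a" using Ds S_def by simp
    have k1: "tk * x \<le> 2 * tk" using x2 tk0 by simp
    have k3: "c * pk \<ge> 0" "c * m \<ge> 0" "a * c \<ge> 0" "c * tk \<ge> 0" using a c0 m0 pkm tk0 by auto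
    have "(S + D) * (x + 1 + c) \<le> (S + m + a + tk) * (x + 1 + c)" using DB sp by (intro mult_right_mono) auto
    also have "\<dots> \<le> (x + 2 + 2 * c) * (S + (m + a))"
      using B[OF S_def k1 tk(2) pkm k3(1,2,3) _ k3(4)] a by simp
    finally show ?thesis using \<open>Ds = m + a\<close> by simp
  qed
  have "(S + D) / (S + Ds) \<le> (x + 2 + 2 * c) / (x + 1 + c)"
    using frac_le_aux[OF Spos sp goal] .
  then show ?thesis unfolding S_def x_def c_def by simp
qed


lemma sum_single:
  assumes "S \<subseteq> {q}" "op_len t p q \<le> b" "0 \<le> b"
  shows "sum (op_len t p) S \<le> b"
proof -
  have "S = {} \<or> S = {q}" using assms(1) by auto
  then show ?thesis
  proof
    assume "S = {}" then show ?thesis using assms(3) by simp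
  next
    assume "S = {q}" then show ?thesis using assms(2) by simp
  qed
qed

theorem mainTheorem11:
  fixes J :: "'a set" and t p :: "'a \<Rightarrow> real" and \<mu> \<nu> :: real
    and ops :: "'a operation list" and j k :: 'a
  assumes "finite J"
    and "\<forall>i\<in>J. t i \<ge> 0 \<and> p i \<ge> 0"
    and "general_position J t p"
    and "\<forall>i\<in>J. t i + p i > 0"
    and "\<mu> > 1" and "0 < \<nu>" and "\<nu> < 1" and "\<mu> * \<nu> > 1"
    and "1 + 1 / \<mu> \<le> \<nu> + \<nu>^2"
    and "k \<in> J"
    and "\<exists>!i. i \<in> J \<and> red_pair \<mu> \<nu> t p i k"
    and "j \<in> J" and "red_pair \<mu> \<nu> t p j k"
    and "one_sort_order J t p ops"
  shows "(t k + p k + DD t p ops j k) / (t k + p k + DDstar t p j k)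
           \<le> (\<nu> + \<nu>^2 + 2 + 2 / \<mu>) / (\<nu> + \<nu>^2 + 1 + 1 / \<mu>)"
proof -
  note gp = assms(3)[unfolded general_position_def]
  note os = assms(14)
  have kj: "k \<noteq> j" using assms(13) unfolding red_pair_def by auto
  have nn: "t j \<ge> 0" "p j \<ge> 0" "t k \<ge> 0" "p k \<ge> 0" using assms(2,10,12) by auto
  have gjj: "t j \<noteq> p j \<and> t j \<noteq> t j + p j \<and> p j \<noteq> t j + p j"
    using bspec[OF bspec[OF gp assms(12)] assms(12)] by blast
  have gjk: "(t j = t k \<longrightarrow> j = k) \<and> (p j = p k \<longrightarrow> j = k) \<and> t j \<noteq> p k"
    using bspec[OF bspec[OF gp assms(12)] assms(10)] by blast
  have gkj: "t k \<noteq> p j"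
    using bspec[OF bspec[OF gp assms(10)] assms(12)] by blast
  have pj0: "p j \<noteq> 0" using gjj by simp
  have tj0: "t j \<noteq> 0" using gjj by simp
  have tkne: "t k \<noteq> t j" "t k \<noteq> p j" using gjk gkj kj by auto
  have pkne: "p k \<noteq> p j" "p k \<noteq> t j" using gjk kj by auto
  define m where "m = max (t j) (p j)"
  define a where "a = min (t j) (p j)"
  have a0: "a > 0" using nn pj0 tj0 unfolding a_def by simp
  have ma: "m + a = t j + p j" unfolding m_def a_def by simp
  have imb: "\<mu> * a \<le> m" using assms(13) unfolding red_pair_def imbalanced_def m_def a_def by simp
  have red: "t k \<le> m" "\<nu> * m \<le> t k" "\<nu> * t k \<le> p k"
    using assms(13) unfolding red_pair_def m_def by auto
  have tkm: "t k < m" using red(1) tkne unfolding m_def by (auto simp: max_def split: if_splits)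
  have pkm: "p k \<noteq> m" using pkne unfolding m_def by (auto simp: max_def)
  define SJ where "SJ = {q \<in> set (takeWhile (\<lambda>q. q \<noteq> Proc k) ops). op_job q = j}"
  define SK where "SK = {q \<in> set (takeWhile (\<lambda>q. q \<noteq> Proc j) ops). op_job q = k}"
  have DDe: "DD t p ops j k = sum (op_len t p) SJ + sum (op_len t p) SK"
    unfolding DD_def SJ_def SK_def dd_eq[OF os] ..
  have Dbound: "DD t p ops j k \<le> (if p k < m then t k + p k + a else m + a + t k)"
  proof (cases "p k < m")
    case True
    have mk: "max (t k) (p k) < m" using True tkm by simp
    have bJ: "q \<in> SJ \<Longrightarrow> op_len t p q \<le> max (t k) (p k)" for q
      using before_bound[OF os assms(10)] unfolding SJ_def by auto
    have "Proc j \<notin> SJ"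
    proof
      assume h: "Proc j \<in> SJ"
      then have "Proc j \<in> set (takeWhile (\<lambda>q. q \<noteq> Proc k) ops)" unfolding SJ_def by simp
      from test_before[OF os this] have "Test j \<in> SJ" unfolding SJ_def by simp
      have "p j \<le> max (t k) (p k)" using bJ[OF h] by simp
      moreover have "t j \<le> max (t k) (p k)" using bJ[OF \<open>Test j \<in> SJ\<close>] by simp
      ultimately have "t j < m" "p j < m" using mk by linarith+
      then show False unfolding m_def by (cases "t j \<le> p j") (simp_all add: max_def)
    qed
    have sub: "SJ \<subseteq> {Test j}"
    proof
      fix q assume q: "q \<in> SJ"
      then have "op_job q = j" unfolding SJ_def by simp
      then show "q \<in> {Test j}" using q \<open>Proc j \<notin> SJ\<close> by (cases q) auto
    qed
    have "sum (op_len t p) SJ \<le> a"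
    proof (cases "Test j \<in> SJ")
      case True
      then have "t j \<le> max (t k) (p k)" using bJ[OF True] by simp
      then have "t j < m" using mk by linarith
      then have "t j = a" unfolding a_def m_def by (auto simp: max_def min_def split: if_splits)
      then show ?thesis using sum_single[OF sub] a0 by simp
    next
      case False
      then have "SJ = {}" using sub by auto
      then show ?thesis using a0 by simp
    qed
    moreover have "sum (op_len t p) SK \<le> t k + p k"
      using sum_two[where x=k and t=t and p=p, OF job_sub nn(3,4)] unfolding SK_def .
    ultimately show ?thesis using DDe True by simp
  next
    case False
    then have pk: "p k > m" using pkm by simp
    have "Proc k \<notin> SK"
    proof
      assume "Proc k \<in> SK"
      then have "Proc k \<in> set (takeWhile (\<lambda>q. q \<noteq> Proc j) ops)" unfolding SK_def by simp
      from before_bound[OF os assms(12) this] have "p k \<le> m" unfolding m_def by simp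
      then show False using pk by simp
    qed
    have sub: "SK \<subseteq> {Test k}"
    proof
      fix q assume q: "q \<in> SK"
      then have "op_job q = k" unfolding SK_def by simp
      then show "q \<in> {Test k}" using q \<open>Proc k \<notin> SK\<close> by (cases q) auto
    qed
    have "sum (op_len t p) SK \<le> t k" using sum_single[OF sub] nn by simp
    moreover have "sum (op_len t p) SJ \<le> t j + p j"
      using sum_two[where x=j and t=t and p=p, OF job_sub nn(1,2)] unfolding SJ_def .
    ultimately show ?thesis using DDe False ma by simp
  qed
  have Ds: "DDstar t p j k = min (m + a) (t k + p k)" unfolding DDstar_def ma ..
  show ?thesis
    by (rule arith_main[OF assms(5-9) a0 imb red(2) tkm red(3) pkm Dbound Ds])
qed

end
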